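(* Let $n\ge2$, $A=\{a_1,\dots,a_k\}$ finite and $u_1,\dots,u_n:A\to\mathbb{R}$. In every subgame-perfect Nash equilibrium of the $P^{n-1}\&C$ game, each player $j\in\{2,\dots,n\}$ obtains payoff $\mathrm{Avg}_j$, and player 1 obtains payoff $\max(u)-\sum_{j=2}^n\mathrm{Avg}_j$.
   Context: Players have quasi-linear utilities $u_i(a)+t_i$. $\mathrm{Avg}_j=\frac1k\sum_{l=1}^k u_j(a_l)$ and $\max(u)=\max_{a\in A}\sum_{i=1}^n u_i(a)$. Let $P=\{p\in\mathbb{R}^k:\sum_j p_j=0\}$. The $P^{n-1}\&C$ game: player 1 chooses $p^2\in P$; then for $i=2,\dots,n-1$ in order, player $i$, having observed $p^2,\dots,p^i$, chooses $p^{i+1}\in P$; finally player $n$, having observed $p^2,\dots,p^n$, chooses an option $a\in A$. Payoffs: $g_1=u_1(a)+p^2(a)$; $g_m=u_m(a)-p^m(a)+p^{m+1}(a)$ for $2\le m\le n-1$; $g_n=u_n(a)-p^n(a)$. Pure strategies map histories to actions; a subgame-perfect Nash equilibrium is a profile inducing a Nash equilibrium in every subgame. *)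

theory Defs
  imports Complex_Main
begin

text \<open>Options are elements of a finite set A (the k options a_1..a_k, k = card A).
  A vector p in R^k is represented as a function A -> real (zero outside A).
  Players are numbered 1..n. A history observed by player i (1 <= i <= n)
  is the list [p^2, ..., p^i] of length i-1. Player i < n chooses p^(i+1);
  player n chooses an option.\<close>

definition Pset :: "'a set \<Rightarrow> ('a \<Rightarrow> real) set" where
  "Pset A = {p. (\<forall>x. x \<notin> A \<longrightarrow> p x = 0) \<and> sum p A = 0}"

definition valid_hist :: "'a set \<Rightarrow> nat \<Rightarrow> ('a \<Rightarrow> real) list \<Rightarrow> bool" where
  "valid_hist A l h \<longleftrightarrow> length h = l \<and> set h \<subseteq> Pset A"

definition valid_profile :: "'a set \<Rightarrow> nat \<Rightarrow> (nat \<Rightarrow> ('a \<Rightarrow> real) list \<Rightarrow> ('a \<Rightarrow> real))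
    \<Rightarrow> (('a \<Rightarrow> real) list \<Rightarrow> 'a) \<Rightarrow> bool" where
  "valid_profile A n s t \<longleftrightarrow>
     (\<forall>i\<in>{1..n-1}. \<forall>h. valid_hist A (i - 1) h \<longrightarrow> s i h \<in> Pset A) \<and>
     (\<forall>h. valid_hist A (n - 1) h \<longrightarrow> t h \<in> A)"

fun extend :: "(nat \<Rightarrow> ('a \<Rightarrow> real) list \<Rightarrow> ('a \<Rightarrow> real)) \<Rightarrow> ('a \<Rightarrow> real) list \<Rightarrow> nat
    \<Rightarrow> ('a \<Rightarrow> real) list" where
  "extend s h 0 = h"
| "extend s h (Suc m) = (let h' = extend s h m in h' @ [s (length h' + 1) h'])"

definition final_hist :: "nat \<Rightarrow> (nat \<Rightarrow> ('a \<Rightarrow> real) list \<Rightarrow> ('a \<Rightarrow> real))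
    \<Rightarrow> ('a \<Rightarrow> real) list \<Rightarrow> ('a \<Rightarrow> real) list" where
  "final_hist n s h = extend s h (n - 1 - length h)"

definition outcome :: "nat \<Rightarrow> (nat \<Rightarrow> ('a \<Rightarrow> real) list \<Rightarrow> ('a \<Rightarrow> real))
    \<Rightarrow> (('a \<Rightarrow> real) list \<Rightarrow> 'a) \<Rightarrow> ('a \<Rightarrow> real) list \<Rightarrow> 'a" where
  "outcome n s t h = t (final_hist n s h)"

definition price :: "nat \<Rightarrow> ('a \<Rightarrow> real) list \<Rightarrow> nat \<Rightarrow> ('a \<Rightarrow> real)" where
  "price n hp m = (if 2 \<le> m \<and> m \<le> n then hp ! (m - 2) else (\<lambda>_. 0))"

text \<open>g_1 = u_1 a + p^2 a; g_m = u_m a - p^m a + p^(m+1) a; g_n = u_n a - p^n a.\<close>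
definition payoff :: "(nat \<Rightarrow> 'a \<Rightarrow> real) \<Rightarrow> nat \<Rightarrow> ('a \<Rightarrow> real) list \<Rightarrow> 'a \<Rightarrow> nat \<Rightarrow> real" where
  "payoff u n hp a m = u m a - price n hp m a + price n hp (Suc m) a"

definition game_payoff :: "(nat \<Rightarrow> 'a \<Rightarrow> real) \<Rightarrow> nat \<Rightarrow> (nat \<Rightarrow> ('a \<Rightarrow> real) list \<Rightarrow> ('a \<Rightarrow> real))
    \<Rightarrow> (('a \<Rightarrow> real) list \<Rightarrow> 'a) \<Rightarrow> ('a \<Rightarrow> real) list \<Rightarrow> nat \<Rightarrow> real" where
  "game_payoff u n s t h m = payoff u n (final_hist n s h) (outcome n s t h) m"

definition SPNE :: "'a set \<Rightarrow> (nat \<Rightarrow> 'a \<Rightarrow> real) \<Rightarrow> nat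
    \<Rightarrow> (nat \<Rightarrow> ('a \<Rightarrow> real) list \<Rightarrow> ('a \<Rightarrow> real)) \<Rightarrow> (('a \<Rightarrow> real) list \<Rightarrow> 'a) \<Rightarrow> bool" where
  "SPNE A u n s t \<longleftrightarrow> valid_profile A n s t \<and>
     (\<forall>l h. l \<le> n - 1 \<longrightarrow> valid_hist A l h \<longrightarrow>
        (\<forall>i\<in>{1..n-1}. \<forall>s'. valid_profile A n (s(i := s')) t \<longrightarrow>
            game_payoff u n (s(i := s')) t h i \<le> game_payoff u n s t h i) \<and>
        (\<forall>t'. valid_profile A n s t' \<longrightarrow>
            game_payoff u n s t' h n \<le> game_payoff u n s t h n))"

definition Avg :: "(nat \<Rightarrow> 'a \<Rightarrow> real) \<Rightarrow> 'a set \<Rightarrow> nat \<Rightarrow> real" where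
  "Avg u A j = (\<Sum>a\<in>A. u j a) / real (card A)"

definition maxu :: "(nat \<Rightarrow> 'a \<Rightarrow> real) \<Rightarrow> nat \<Rightarrow> 'a set \<Rightarrow> real" where
  "maxu u n A = Max ((\<lambda>a. \<Sum>i=1..n. u i a) ` A)"

end

theory Submission
  imports Defs
begin

lemma ext_app: "\<exists>r. extend s h k = h @ r \<and> length r = k"
proof (induction k)
  case 0 then show ?case by simp
next
  case (Suc k) then obtain r where "extend s h k = h @ r" "length r = k" by blast
  then show ?case by (auto simp: Let_def)
qed

lemma ext_shift: "extend s h (Suc k) = extend s (h @ [s (Suc (length h)) h]) k"
  by (induction k) (simp_all add: Let_def)

lemma ext_upd: "m \<le> length h \<Longrightarrow> extend (s(m:=s')) h k = extend s h k"
proof (induction k)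
  case 0 then show ?case by simp
next
  case (Suc k)
  obtain r where "extend s h k = h @ r" using ext_app by blast
  then show ?case using Suc by (simp add: Let_def)
qed

lemma fh_step: "length h < n - 1 \<Longrightarrow>
  final_hist n s h = final_hist n s (h @ [s (Suc (length h)) h])"
proof -
  assume a: "length h < n - 1"
  then have "n - 1 - length h = Suc (n - 1 - length (h @ [s (Suc (length h)) h]))" by simp
  then show ?thesis unfolding final_hist_def by (simp only: ext_shift)
qed

lemma fh_dev: "length h < n - 1 \<Longrightarrow> s' h = q \<Longrightarrow>
  final_hist n (s(Suc (length h) := s')) h = final_hist n s (h @ [q])"
proof -
  assume a: "length h < n - 1" and q: "s' h = q"
  have "final_hist n (s(Suc (length h) := s')) h
     = final_hist n (s(Suc (length h) := s')) (h @ [q])"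
    using fh_step[OF a, of "s(Suc (length h) := s')"] q by simp
  also have "\<dots> = final_hist n s (h @ [q])"
    unfolding final_hist_def by (rule ext_upd) simp
  finally show ?thesis .
qed

definition cur :: "('a \<Rightarrow> real) list \<Rightarrow> 'a \<Rightarrow> real" where
  "cur h = (if h = [] then (\<lambda>_. 0) else last h)"

lemma price_cur: "length h < n - 1 \<Longrightarrow> price n (h @ q # r) (Suc (length h)) = cur h"
  unfolding price_def cur_def
  by (cases h rule: rev_cases) (auto simp: nth_append)

lemma price_q: "length h < n - 1 \<Longrightarrow> price n (h @ q # r) (Suc (Suc (length h))) = q"
  unfolding price_def by (auto simp: nth_append)

lemma price_base: "n \<ge> 2 \<Longrightarrow> length h = n - 1 \<Longrightarrow> price n h n = cur h"
  unfolding price_def cur_def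
  by (cases h rule: rev_cases) (auto simp: nth_append)

lemma price_top: "price n h (Suc n) = (\<lambda>_. 0)"
  unfolding price_def by auto

lemma fh_app: "length h \<le> n - 1 \<Longrightarrow> \<exists>r. final_hist n s h = h @ r \<and> length h + length r = n - 1"
  unfolding final_hist_def using ext_app by (metis add_diff_inverse_nat not_less)

definition Sf :: "(nat \<Rightarrow> 'a \<Rightarrow> real) \<Rightarrow> nat \<Rightarrow> nat \<Rightarrow> 'a \<Rightarrow> real" where
  "Sf u n m b = (\<Sum>i=m..n. u i b)"

definition Wv :: "(nat \<Rightarrow> 'a \<Rightarrow> real) \<Rightarrow> nat \<Rightarrow> ('a \<Rightarrow> real) list \<Rightarrow> 'a \<Rightarrow> real" where
  "Wv u n h b = Sf u n (Suc (length h)) b - cur h b"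

definition Inv where
  "Inv A u n s t h \<longleftrightarrow> outcome n s t h \<in> A \<and>
     (\<forall>b\<in>A. Wv u n h b \<le> Wv u n h (outcome n s t h)) \<and>
     game_payoff u n s t h (Suc (length h)) = Max (Wv u n h ` A) - (\<Sum>i=Suc (Suc (length h))..n. Avg u A i) \<and>
     (\<forall>j\<in>{Suc (Suc (length h))..n}. game_payoff u n s t h j = Avg u A j)"

lemma avg_sum: "finite A \<Longrightarrow> (\<Sum>i=m..n. Avg u A i) = (\<Sum>b\<in>A. Sf u n m b) / real (card A)"
  unfolding Avg_def Sf_def by (simp add: sum_divide_distrib[symmetric] sum.swap[of _ A])

lemma sum_le_card: "finite A \<Longrightarrow> (\<And>b. b \<in> A \<Longrightarrow> f b \<le> M) \<Longrightarrow> sum f A \<le> real (card A) * M"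
  using sum_bounded_above[of A f M] by simp

lemma inv:
  assumes n2: "n \<ge> 2" and fin: "finite A" and ne: "A \<noteq> {}" and sp: "SPNE A u n s t"
  shows "d \<le> n - 1 \<Longrightarrow> valid_hist A (n - 1 - d) h \<Longrightarrow> Inv A u n s t h"
proof (induction d arbitrary: h)
  have vp: "valid_profile A n s t" using sp unfolding SPNE_def by blast
  have devt: "\<And>l h t'. l \<le> n - 1 \<Longrightarrow> valid_hist A l h \<Longrightarrow> valid_profile A n s t' \<Longrightarrow>
      game_payoff u n s t' h n \<le> game_payoff u n s t h n"
    using sp unfolding SPNE_def by blast
  case 0
  then have len: "length h = n - 1" and vh: "valid_hist A (n - 1) h" by (simp_all add: valid_hist_def)
  have F: "final_hist n s h = h" unfolding final_hist_def using len by simp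
  have O: "outcome n s t h = t h" unfolding outcome_def F ..
  have tA: "t h \<in> A" using vp vh unfolding valid_profile_def by blast
  have W: "Wv u n h b = u n b - cur h b" for b
    unfolding Wv_def Sf_def using len n2 by simp
  have gp: "game_payoff u n s t' h n = Wv u n h (t' h)" for t'
    unfolding game_payoff_def outcome_def F payoff_def W
    using price_base[OF n2 len] by (simp add: price_def)
  have best: "Wv u n h b \<le> Wv u n h (t h)" if b: "b \<in> A" for b
  proof -
    have "valid_profile A n s (t(h := b))"
      using vp b unfolding valid_profile_def by auto
    from devt[OF _ vh this] show ?thesis using gp[of "t(h:=b)"] gp[of t] by simp
  qed
  have mx: "Max (Wv u n h ` A) = Wv u n h (t h)"
    by (rule Max_eqI) (use fin tA best in auto)
  show ?case unfolding Inv_def O using tA best mx gp[of t] len n2 by auto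
next
  case (Suc d)
  have vp: "valid_profile A n s t" using sp unfolding SPNE_def by blast
  have devs: "\<And>l h i s'. l \<le> n - 1 \<Longrightarrow> valid_hist A l h \<Longrightarrow> i \<in> {1..n-1} \<Longrightarrow>
      valid_profile A n (s(i := s')) t \<Longrightarrow>
      game_payoff u n (s(i := s')) t h i \<le> game_payoff u n s t h i"
    using sp unfolding SPNE_def by blast
  define l where "l = length h"
  define m where "m = Suc l"
  have len: "length h = n - 1 - Suc d" and vh: "valid_hist A l h" using Suc.prems
    by (auto simp: valid_hist_def l_def)
  have lt: "l < n - 1" using len Suc.prems l_def by simp
  have mn: "m \<le> n - 1" using lt m_def by simp
  have IH: "Inv A u n s t (h @ [q'])" if "q' \<in> Pset A" for q'
    using Suc.IH[of "h @ [q']"] Suc.prems that len unfolding valid_hist_def by auto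
  define q where "q = s m h"
  have qP: "q \<in> Pset A" using vp vh mn unfolding valid_profile_def q_def m_def by auto
  define h' where "h' = h @ [q]"
  have Fh: "final_hist n s h = final_hist n s h'"
    using fh_step[of h n s] lt unfolding h'_def q_def m_def l_def by simp
  have Oh: "outcome n s t h = outcome n s t h'" unfolding outcome_def Fh ..
  have gpeq: "game_payoff u n s t h j = game_payoff u n s t h' j" for j
    unfolding game_payoff_def Fh Oh ..
  define a where "a = outcome n s t h"
  have IHq: "Inv A u n s t h'" using IH[OF qP] h'_def by simp
  have aA: "a \<in> A" and amax': "\<And>b. b \<in> A \<Longrightarrow> Wv u n h' b \<le> Wv u n h' a"
    using IHq unfolding Inv_def a_def Oh by auto
  have lh': "length h' = m" unfolding h'_def m_def l_def by simp
  have Wh': "Wv u n h' b = Sf u n (Suc m) b - q b" for b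
    unfolding Wv_def lh' cur_def h'_def by (simp add: m_def l_def)
  have Sfs: "Sf u n m b = u m b + Sf u n (Suc m) b" for b
    unfolding Sf_def using mn by (simp add: sum.atLeast_Suc_atMost)
  have Wh: "Wv u n h b = u m b + Sf u n (Suc m) b - cur h b" for b
    using Sfs[of b] unfolding Wv_def m_def l_def by simp
  have gpform: "payoff u n (final_hist n s (h @ [q'])) b m = u m b - cur h b + q' b" for q' b
  proof -
    obtain r where r: "final_hist n s (h @ [q']) = (h @ [q']) @ r"
      using fh_app[of "h @ [q']" n s] lt l_def by auto
    show ?thesis unfolding r payoff_def using price_cur[of h n q' r] price_q[of h n q' r] lt
      by (simp add: m_def l_def)
  qed
  define C where "C = (\<Sum>i=Suc m..n. Avg u A i)"
  have C: "C = (\<Sum>b\<in>A. Sf u n (Suc m) b) / real (card A)"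
    unfolding C_def using avg_sum[OF fin] .
  have cpos: "real (card A) > 0" using fin ne by (simp add: card_gt_0_iff)
  have sumP: "sum p A = 0" if "p \<in> Pset A" for p using that unfolding Pset_def by auto
  define MW where "MW = Max (Wv u n h ` A)"
  have pm: "game_payoff u n s t h m = Wv u n h a - Wv u n h' a"
    unfolding game_payoff_def a_def[symmetric] Fh h'_def gpform Wh Wh'[unfolded h'_def]
    by simp
  have M'ge: "Wv u n h' a \<ge> C"
  proof -
    have "(\<Sum>b\<in>A. Wv u n h' b) \<le> real (card A) * Wv u n h' a"
      by (rule sum_le_card[OF fin amax'])
    moreover have "(\<Sum>b\<in>A. Wv u n h' b) = real (card A) * C"
      unfolding Wh' C using sumP[OF qP] cpos by (simp add: sum_subtractf)
    ultimately show ?thesis using cpos by simp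
  qed
  have WleMW: "Wv u n h b \<le> MW" if "b \<in> A" for b
    unfolding MW_def using fin that by simp
  have upper: "game_payoff u n s t h m \<le> MW - C"
    using pm M'ge WleMW[OF aA] by simp
  obtain astar where asA: "astar \<in> A" and asM: "Wv u n h astar = MW"
  proof -
    have "MW \<in> Wv u n h ` A" unfolding MW_def using fin ne by (intro Max_in) auto
    then show ?thesis using that by auto
  qed
  have lower: "game_payoff u n s t h m \<ge> MW - C"
  proof (rule ccontr)
    assume nt: "\<not> ?thesis"
    define e where "e = (MW - C - game_payoff u n s t h m) / 2"

    have epos: "e > 0" using nt e_def by simp
    define k where "k = real (card A)"
    define qe where "qe = (\<lambda>b. if b \<in> A then Sf u n (Suc m) b - C - (if b = astar then e else 0) + e / k else 0)"
    have sqe: "sum qe A = 0"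
    proof -
      have "sum qe A = (\<Sum>b\<in>A. Sf u n (Suc m) b) - k * C - (\<Sum>b\<in>A. (if b = astar then e else 0)) + k * (e / k)"
        unfolding qe_def k_def using fin by (simp add: sum.distrib sum_subtractf)
      also have "\<dots> = 0" using asA fin cpos ne unfolding C k_def by simp
      finally show ?thesis .
    qed
    have qeP: "qe \<in> Pset A" unfolding Pset_def using sqe by (auto simp: qe_def)
    define s' where "s' = (\<lambda>h''. if h'' = h then qe else s m h'')"
    have vp': "valid_profile A n (s(m := s')) t"
      using vp qeP unfolding valid_profile_def s'_def by auto
    have dev: "game_payoff u n (s(m := s')) t h m \<le> game_payoff u n s t h m"
      using devs[OF _ vh _ vp'] lt mn m_def by simp
    have Fd: "final_hist n (s(m := s')) h = final_hist n s (h @ [qe])"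
      using fh_dev[of h n s' qe s] lt unfolding m_def l_def s'_def by simp
    define ae where "ae = outcome n s t (h @ [qe])"
    have Od: "outcome n (s(m := s')) t h = ae" unfolding outcome_def Fd ae_def ..
    have IHe: "Inv A u n s t (h @ [qe])" using IH[OF qeP] .
    have aeA: "ae \<in> A" and aemax: "Wv u n (h @ [qe]) astar \<le> Wv u n (h @ [qe]) ae"
      using IHe asA unfolding Inv_def ae_def by auto
    have Whe: "Wv u n (h @ [qe]) b = C + (if b = astar then e else 0) - e / k" if "b \<in> A" for b
      unfolding Wv_def cur_def using that lh' unfolding h'_def by (simp add: qe_def)
    have "ae = astar"
    proof (rule ccontr)
      assume "ae \<noteq> astar"
      then show False using aemax Whe[OF aeA] Whe[OF asA] epos by simp
    qed
    have "game_payoff u n (s(m := s')) t h m = u m astar - cur h astar + qe astar"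
      unfolding game_payoff_def Fd Od gpform \<open>ae = astar\<close> ..
    also have "\<dots> = MW - C - e + e / k"
      using asM asA unfolding Wh qe_def by simp
    finally have "game_payoff u n (s(m := s')) t h m = MW - C - e + e / k" .
    moreover have "e / k > 0" using epos cpos k_def by simp
    ultimately have "MW - C - e < game_payoff u n (s(m := s')) t h m" by linarith
    then have "MW - C - e < game_payoff u n s t h m" using dev by linarith
    then show False using e_def epos nt by (simp add: field_simps)
  qed
  have eqp: "game_payoff u n s t h m = MW - C" using upper lower by simp
  have WaMW: "Wv u n h a = MW" and M'C: "Wv u n h' a = C"
    using eqp pm M'ge WleMW[OF aA] by simp_all
  have p1: "game_payoff u n s t h (Suc m) = Avg u A (Suc m)"
  proof -
    have "game_payoff u n s t h (Suc m) = Max (Wv u n h' ` A) - (\<Sum>i=Suc (Suc m)..n. Avg u A i)"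
      using IHq unfolding Inv_def gpeq lh' by simp
    also have "Max (Wv u n h' ` A) = C"
      using M'C amax' aA fin by (intro Max_eqI) auto
    also have "C = Avg u A (Suc m) + (\<Sum>i=Suc (Suc m)..n. Avg u A i)"
      unfolding C_def using mn n2 by (subst sum.atLeast_Suc_atMost) auto
    finally show ?thesis by simp
  qed
  have rest: "\<forall>j\<in>{Suc (Suc m)..n}. game_payoff u n s t h j = Avg u A j"
    using IHq unfolding Inv_def gpeq lh' by simp
  have allj: "\<forall>j\<in>{Suc m..n}. game_payoff u n s t h j = Avg u A j"
  proof
    fix j assume "j \<in> {Suc m..n}"
    then have "j = Suc m \<or> j \<in> {Suc (Suc m)..n}" by auto
    then show "game_payoff u n s t h j = Avg u A j" using p1 rest by auto
  qed
  show ?case unfolding Inv_def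
    using aA WleMW WaMW eqp allj
    unfolding a_def MW_def C_def m_def l_def by auto
qed

theorem mainTheorem7:
  fixes A :: "'a set" and u :: "nat \<Rightarrow> 'a \<Rightarrow> real" and n :: nat
    and s :: "nat \<Rightarrow> ('a \<Rightarrow> real) list \<Rightarrow> ('a \<Rightarrow> real)"
    and t :: "('a \<Rightarrow> real) list \<Rightarrow> 'a"
  assumes "n \<ge> 2" and "finite A" and "A \<noteq> {}"
    and "SPNE A u n s t"
  shows "(\<forall>j\<in>{2..n}. game_payoff u n s t [] j = Avg u A j) \<and>
         game_payoff u n s t [] 1 = maxu u n A - (\<Sum>j=2..n. Avg u A j)"
proof -
  have "Inv A u n s t []"
    using inv[OF assms, of "n - 1" "[]"] by (simp add: valid_hist_def)
  moreover have "Wv u n [] = (\<lambda>a. \<Sum>i=1..n. u i a)"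
    by (auto simp: Wv_def Sf_def cur_def)
  ultimately show ?thesis unfolding Inv_def maxu_def by (simp add: numeral_2_eq_2)
qed

end
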